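(* Let $\mu<\lambda$ be infinite cardinals with $\mu^{<\mu}=\mu$ and $\lambda$ regular. If $p,q\in\mathbb P(\lambda,\mu)$ coincide on $[\operatorname{dom}p\cap\operatorname{dom}q]^2$, then $p$ and $q$ are compatible in $\mathbb P(\lambda,\mu)$, i.e. there is $s\in\mathbb P(\lambda,\mu)$ with $p\cup q\subseteq s$.
   Context: Let $3$ denote the three-element set of symbols $\{\ge,\perp,u\}$. For a set $w$ of ordinals, $[w]^2=\{(i,j): i<j,\ i,j\in w\}$. A valuation function is a map $p:[w]^2\to 3$ (with domain $w$, written $\operatorname{dom}p$) such that: (1) if $i<j<k$ in $w$, $p(i,j)={\ge}$ and $p(j,k)={\ge}$, then $p(i,k)={\ge}$; (2) if $i<j<k$ in $w$ and $\{p(i,j),p(i,k)\}=\{\perp,\ge\}$ then $p(j,k)={\perp}$; and if $i<j<k$, $p(i,j)={\perp}$, $p(j,k)={\ge}$, then $p(i,k)={\perp}$. $\mathbb P(\lambda,\mu)$ is the set of valuation functions whose domain is a subset of $\lambda$ of cardinality less than $\mu$, ordered by reverse inclusion (so $s$ is stronger than $p$ iff $s\supseteq p$). *)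

theory Defs
  imports Main
begin

unbundle cardinal_syntax

datatype sym3 = Ge | Perp | U

(* Cardinals are represented by card-orders (initial well-orders); the
   ordinals below lambda are the elements of Field lam, ordered strictly by lam. *)
definition olt :: "'a rel \<Rightarrow> 'a \<Rightarrow> 'a \<Rightarrow> bool" where
  "olt lam i j \<longleftrightarrow> (i, j) \<in> lam \<and> i \<noteq> j"

definition pairs2 :: "'a rel \<Rightarrow> 'a set \<Rightarrow> ('a \<times> 'a) set" where
  "pairs2 lam w = {(i, j). i \<in> w \<and> j \<in> w \<and> olt lam i j}"

definition valuation :: "'a rel \<Rightarrow> 'a set \<Rightarrow> ('a \<times> 'a \<Rightarrow> sym3 option) \<Rightarrow> bool" where
  "valuation lam w f \<longleftrightarrow> dom f = pairs2 lam w \<and>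
     (\<forall>i\<in>w. \<forall>j\<in>w. \<forall>k\<in>w. olt lam i j \<longrightarrow> olt lam j k \<longrightarrow>
        (f (i, j) = Some Ge \<and> f (j, k) = Some Ge \<longrightarrow> f (i, k) = Some Ge) \<and>
        ({f (i, j), f (i, k)} = {Some Perp, Some Ge} \<longrightarrow> f (j, k) = Some Perp) \<and>
        (f (i, j) = Some Perp \<and> f (j, k) = Some Ge \<longrightarrow> f (i, k) = Some Perp))"

definition PP :: "'a rel \<Rightarrow> 'b rel \<Rightarrow> ('a set \<times> ('a \<times> 'a \<Rightarrow> sym3 option)) set" where
  "PP lam mu = {(w, f). w \<subseteq> Field lam \<and> |w| <o mu \<and> valuation lam w f}"

(* the set  U_{kappa < mu} mu^kappa  (functions from small subsets of mu into mu);
   its cardinality is mu^{<mu} *)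
definition small_funcs :: "'b rel \<Rightarrow> ('b set \<times> ('b \<Rightarrow> 'b)) set" where
  "small_funcs mu = {(K, g). K \<subseteq> Field mu \<and> |K| <o mu \<and> g \<in> Func K (Field mu)}"

end

theory Submission
  imports Defs
begin

definition tri :: "'a set \<Rightarrow> 'a set \<Rightarrow> 'a \<Rightarrow> 'a \<Rightarrow> 'a \<Rightarrow> bool" where
  "tri A B x y z \<longleftrightarrow> (x \<in> A \<and> y \<in> A \<and> z \<in> A) \<or> (x \<in> B \<and> y \<in> B \<and> z \<in> B)"

locale amal =
  fixes lt :: "'a \<Rightarrow> 'a \<Rightarrow> bool" and A B :: "'a set" and H :: "'a \<times> 'a \<Rightarrow> sym3 option"
  assumes trans: "lt x y \<Longrightarrow> lt y z \<Longrightarrow> lt x z"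
    and asym: "lt x y \<Longrightarrow> \<not> lt y x"
    and total: "x \<in> A \<union> B \<Longrightarrow> y \<in> A \<union> B \<Longrightarrow> x \<noteq> y \<Longrightarrow> lt x y \<or> lt y x"
    and side: "lt x y \<Longrightarrow> H (x, y) \<noteq> None \<Longrightarrow> (x \<in> A \<and> y \<in> A) \<or> (x \<in> B \<and> y \<in> B)"
    and ax1: "lt x y \<Longrightarrow> lt y z \<Longrightarrow> tri A B x y z \<Longrightarrow>
        H (x, y) = Some Ge \<Longrightarrow> H (y, z) = Some Ge \<Longrightarrow> H (x, z) = Some Ge"
    and ax2: "lt x y \<Longrightarrow> lt y z \<Longrightarrow> tri A B x y z \<Longrightarrow>
        H (x, y) = Some Ge \<Longrightarrow> H (x, z) = Some Perp \<Longrightarrow> H (y, z) = Some Perp"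
    and ax2': "lt x y \<Longrightarrow> lt y z \<Longrightarrow> tri A B x y z \<Longrightarrow>
        H (x, y) = Some Perp \<Longrightarrow> H (x, z) = Some Ge \<Longrightarrow> H (y, z) = Some Perp"
    and ax3: "lt x y \<Longrightarrow> lt y z \<Longrightarrow> tri A B x y z \<Longrightarrow>
        H (x, y) = Some Perp \<Longrightarrow> H (y, z) = Some Ge \<Longrightarrow> H (x, z) = Some Perp"
begin

definition GW where "GW x y \<longleftrightarrow> H (x, y) = Some Ge \<or>
  (\<exists>d\<in>A \<inter> B. lt x d \<and> lt d y \<and> H (x, d) = Some Ge \<and> H (d, y) = Some Ge)"

definition PW where "PW x y \<longleftrightarrow> H (x, y) = Some Perp \<or>
  (\<exists>d\<in>A \<inter> B. lt d x \<and> H (d, x) = Some Ge \<and> H (d, y) = Some Perp) \<or>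
  (\<exists>d\<in>A \<inter> B. lt d x \<and> H (d, x) = Some Perp \<and> H (d, y) = Some Ge) \<or>
  (\<exists>d\<in>A \<inter> B. lt x d \<and> lt d y \<and> H (x, d) = Some Perp \<and> H (d, y) = Some Ge)"

lemma side': "lt x y \<Longrightarrow> H (x, y) = Some v \<Longrightarrow> (x \<in> A \<and> y \<in> A) \<or> (x \<in> B \<and> y \<in> B)"
  using side by auto

lemma tH: "lt x y \<Longrightarrow> H (x, y) = Some v \<Longrightarrow> z \<in> A \<inter> B \<Longrightarrow>
    tri A B x y z \<and> tri A B x z y \<and> tri A B z x y"
  using side'[of x y v] by (auto simp: tri_def)

lemma tD: "x \<in> A \<union> B \<Longrightarrow> y \<in> A \<inter> B \<Longrightarrow> z \<in> A \<inter> B \<Longrightarrow>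
    tri A B x y z \<and> tri A B y x z \<and> tri A B y z x"
  by (auto simp: tri_def)

lemma GWE:
  assumes "GW x y"
  obtains (g1) "H (x, y) = Some Ge"
   | (g2) e where "e \<in> A \<inter> B" "lt x e" "lt e y" "H (x, e) = Some Ge" "H (e, y) = Some Ge"
  using assms unfolding GW_def by blast

lemma PWE:
  assumes "PW x y"
  obtains (p0) "H (x, y) = Some Perp"
   | (p1) d where "d \<in> A \<inter> B" "lt d x" "H (d, x) = Some Ge" "H (d, y) = Some Perp"
   | (p2) d where "d \<in> A \<inter> B" "lt d x" "H (d, x) = Some Perp" "H (d, y) = Some Ge"
   | (p3) d where "d \<in> A \<inter> B" "lt x d" "lt d y" "H (x, d) = Some Perp" "H (d, y) = Some Ge"
  using assms unfolding PW_def by blast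

lemma L0:
  assumes "lt x y" "x \<in> A \<union> B" "y \<in> A \<union> B" "GW x y" "PW x y"
  shows False
  using assms(4)
proof (cases rule: GWE)
  case g1
  from assms(5) show False
  proof (cases rule: PWE)
    case p0 then show ?thesis using g1 by simp
  next
    case (p1 d) then show ?thesis using g1 ax2[of d x y] tH[of x y Ge d] assms(1) by auto
  next
    case (p2 d) then show ?thesis using g1 ax2'[of d x y] tH[of x y Ge d] assms(1) by auto
  next
    case (p3 d) then show ?thesis using g1 ax2'[of x d y] tH[of x y Ge d] assms(1) by auto
  qed
next
  case (g2 e)
  from assms(5) show False
  proof (cases rule: PWE)
    case p0 then show ?thesis using g2 ax1[of x e y] tH[of x y Perp e] assms(1) by auto
  next
    case (p1 d)
    have "H (d, e) = Some Ge" using p1 g2 assms ax1[of d x e] tD[of x d e] by auto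
    then show ?thesis using p1 g2 assms ax2[of d e y] tD[of y d e] trans[of d x e] by auto
  next
    case (p2 d)
    have "H (d, e) = Some Perp" using p2 g2 assms ax3[of d x e] tD[of x d e] by auto
    then show ?thesis using p2 g2 assms ax2'[of d e y] tD[of y d e] trans[of d x e] by auto
  next
    case (p3 d)
    consider "d = e" | "lt d e" | "lt e d" using total p3 g2 by blast
    then show ?thesis
    proof cases
      case 1 then show ?thesis using p3 g2 by simp
    next
      case 2
      have "H (d, e) = Some Perp" using p3 g2 2 assms ax2'[of x d e] tD[of x d e] by auto
      then show ?thesis using p3 g2 2 assms ax2'[of d e y] tD[of y d e] by auto
    next
      case 3
      have "H (e, d) = Some Perp" using p3 g2 3 assms ax2[of x e d] tD[of x e d] by auto
      then show ?thesis using p3 g2 3 assms ax3[of e d y] tD[of y e d] by auto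
    qed
  qed
qed

lemma tJ: "lt i j \<Longrightarrow> lt j k \<Longrightarrow> H (i, j) = Some v \<Longrightarrow> H (j, k) = Some w \<Longrightarrow> j \<notin> A \<inter> B \<Longrightarrow> tri A B i j k"
  using side'[of i j v] side'[of j k w] by (auto simp: tri_def)

lemma tI: "lt i j \<Longrightarrow> lt j k \<Longrightarrow> H (i, j) = Some v \<Longrightarrow> H (i, k) = Some w \<Longrightarrow> i \<notin> A \<inter> B \<Longrightarrow> tri A B i j k"
  using side'[of i j v] side'[of i k w] trans[of i j k] by (auto simp: tri_def)

lemma L1:
  assumes "lt i j" "lt j k" "i \<in> A \<union> B" "j \<in> A \<union> B" "k \<in> A \<union> B" "GW i j" "GW j k"
  shows "GW i k"
  using assms(6)
proof (cases rule: GWE)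
  case g1
  from assms(7) show ?thesis
  proof (cases rule: GWE)
    case g1': g1
    show ?thesis
    proof (cases "j \<in> A \<inter> B")
      case True then show ?thesis using g1 g1' assms(1,2) unfolding GW_def by blast
    next
      case False then show ?thesis using g1 g1' assms(1,2) ax1[of i j k] tJ[of i j k Ge Ge] unfolding GW_def by blast
    qed
  next
    case (g2 e)
    have "H (i, e) = Some Ge" using g1 g2 assms ax1[of i j e] tH[of i j Ge e] by auto
    then show ?thesis using g2 assms trans[of i j e] unfolding GW_def by blast
  qed
next
  case (g2 d)
  from assms(7) show ?thesis
  proof (cases rule: GWE)
    case g1
    have "H (d, k) = Some Ge" using g1 g2 assms ax1[of d j k] tH[of j k Ge d] by auto
    then show ?thesis using g2 assms trans[of d j k] unfolding GW_def by blast
  next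
    case g2': (g2 e)
    have de: "H (d, e) = Some Ge" using g2 g2' assms ax1[of d j e] tD[of j d e] by auto
    have "H (i, e) = Some Ge" using g2 g2' de assms ax1[of i d e] tD[of i d e] trans[of d j e] by auto
    then show ?thesis using g2' assms trans[of i j e] unfolding GW_def by blast
  qed
qed

lemma L2a:
  assumes "lt i j" "lt j k" "i \<in> A \<union> B" "j \<in> A \<union> B" "k \<in> A \<union> B" "GW i j" "PW i k"
  shows "PW j k"
  using assms(6)
proof (cases rule: GWE)
  case g1
  from assms(7) show ?thesis
  proof (cases rule: PWE)
    case p0
    show ?thesis
    proof (cases "i \<in> A \<inter> B")
      case True then show ?thesis using g1 p0 assms(1,2) unfolding PW_def by blast
    next
      case False then show ?thesis using g1 p0 assms(1,2) ax2[of i j k] tI[of i j k Ge Perp] unfolding PW_def by blast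
    qed
  next
    case (p1 d)
    have "H (d, j) = Some Ge" using g1 p1 assms ax1[of d i j] tH[of i j Ge d] by auto
    then show ?thesis using p1 assms trans[of d i j] unfolding PW_def by blast
  next
    case (p2 d)
    have "H (d, j) = Some Perp" using g1 p2 assms ax3[of d i j] tH[of i j Ge d] by auto
    then show ?thesis using p2 assms trans[of d i j] unfolding PW_def by blast
  next
    case (p3 d)
    consider "d = j" | "lt d j" | "lt j d" using total p3 assms by blast
    then show ?thesis
    proof cases
      case 1 then show ?thesis using p3 g1 by simp
    next
      case 2
      have "H (d, j) = Some Perp" using p3 g1 2 assms ax2'[of i d j] tH[of i j Ge d] by auto
      then show ?thesis using p3 2 unfolding PW_def by blast
    next
      case 3
      have "H (j, d) = Some Perp" using p3 g1 3 assms ax2[of i j d] tH[of i j Ge d] by auto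
      then show ?thesis using p3 3 unfolding PW_def by blast
    qed
  qed
next
  case (g2 e)
  from assms(7) show ?thesis
  proof (cases rule: PWE)
    case p0
    have "H (e, k) = Some Perp" using g2 p0 assms ax2[of i e k] tH[of i k Perp e] trans[of i j k] trans[of e j k] by auto
    then show ?thesis using g2 unfolding PW_def by blast
  next
    case (p1 d)
    have "H (d, e) = Some Ge" using g2 p1 assms ax1[of d i e] tD[of i d e] by auto
    then have "H (d, j) = Some Ge" using g2 p1 assms ax1[of d e j] tD[of j d e] trans[of d i e] by auto
    then show ?thesis using p1 assms trans[of d i j] unfolding PW_def by blast
  next
    case (p2 d)
    have "H (d, e) = Some Perp" using g2 p2 assms ax3[of d i e] tD[of i d e] by auto
    then have "H (d, j) = Some Perp" using g2 p2 assms ax3[of d e j] tD[of j d e] trans[of d i e] by auto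
    then show ?thesis using p2 assms trans[of d i j] unfolding PW_def by blast
  next
    case (p3 d)
    consider "d = e" | "lt d e" | "lt e d" using total p3 g2 by blast
    then show ?thesis
    proof cases
      case 1 then show ?thesis using p3 g2 by simp
    next
      case 2
      have "H (d, e) = Some Perp" using p3 g2 2 assms ax2'[of i d e] tD[of i d e] by auto
      then have "H (d, j) = Some Perp" using p3 g2 2 assms ax3[of d e j] tD[of j d e] by auto
      then show ?thesis using p3 g2 2 trans[of d e j] unfolding PW_def by blast
    next
      case 3
      have ed: "H (e, d) = Some Perp" using p3 g2 3 assms ax2[of i e d] tD[of i e d] by auto
      consider "d = j" | "lt d j" | "lt j d" using total p3 assms by blast
      then show ?thesis
      proof cases
        case 1 then show ?thesis using ed g2 by simp
      next
        case 4: 2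
        have "H (d, j) = Some Perp" using p3 g2 3 4 ed assms ax2'[of e d j] tD[of j e d] by auto
        then show ?thesis using p3 4 unfolding PW_def by blast
      next
        case 4: 3
        have "H (j, d) = Some Perp" using p3 g2 3 4 ed assms ax2[of e j d] tD[of j e d] by auto
        then show ?thesis using p3 4 unfolding PW_def by blast
      qed
    qed
  qed
qed

lemma L2b:
  assumes "lt i j" "lt j k" "i \<in> A \<union> B" "j \<in> A \<union> B" "k \<in> A \<union> B" "PW i j" "GW i k"
  shows "PW j k"
  using assms(7)
proof (cases rule: GWE)
  case g1
  from assms(6) show ?thesis
  proof (cases rule: PWE)
    case p0
    show ?thesis
    proof (cases "i \<in> A \<inter> B")
      case True then show ?thesis using g1 p0 assms(1,2) unfolding PW_def by blast
    next
      case False then show ?thesis using g1 p0 assms(1,2) ax2'[of i j k] tI[of i j k Perp Ge] unfolding PW_def by blast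
    qed
  next
    case (p1 d)
    have "H (d, k) = Some Ge" using g1 p1 assms ax1[of d i k] tH[of i k Ge d] trans[of i j k] by auto
    then show ?thesis using p1 assms trans[of d i j] unfolding PW_def by blast
  next
    case (p2 d)
    have "H (d, k) = Some Perp" using g1 p2 assms ax3[of d i k] tH[of i k Ge d] trans[of i j k] by auto
    then show ?thesis using p2 assms trans[of d i j] unfolding PW_def by blast
  next
    case (p3 d)
    have "H (d, k) = Some Perp" using g1 p3 assms ax2'[of i d k] tH[of i k Ge d] trans[of i j k] trans[of d j k] by auto
    then show ?thesis using p3 unfolding PW_def by blast
  qed
next
  case (g2 e)
  from assms(6) show ?thesis
  proof (cases rule: PWE)
    case p0
    consider "e = j" | "lt e j" | "lt j e" using total g2 assms by blast
    then show ?thesis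
    proof cases
      case 1 then show ?thesis using p0 g2 by simp
    next
      case 2
      have "H (e, j) = Some Perp" using p0 g2 2 assms ax2[of i e j] tH[of i j Perp e] by auto
      then show ?thesis using g2 2 unfolding PW_def by blast
    next
      case 3
      have "H (j, e) = Some Perp" using p0 g2 3 assms ax2'[of i j e] tH[of i j Perp e] by auto
      then show ?thesis using g2 3 unfolding PW_def by blast
    qed
  next
    case (p1 d)
    have "H (d, e) = Some Ge" using g2 p1 assms ax1[of d i e] tD[of i d e] by auto
    then have "H (d, k) = Some Ge" using g2 p1 assms ax1[of d e k] tD[of k d e] trans[of d i e] by auto
    then show ?thesis using p1 assms trans[of d i j] unfolding PW_def by blast
  next
    case (p2 d)
    have "H (d, e) = Some Perp" using g2 p2 assms ax3[of d i e] tD[of i d e] by auto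
    then have "H (d, k) = Some Perp" using g2 p2 assms ax3[of d e k] tD[of k d e] trans[of d i e] by auto
    then show ?thesis using p2 assms trans[of d i j] unfolding PW_def by blast
  next
    case (p3 d)
    consider "d = e" | "lt d e" | "lt e d" using total p3 g2 by blast
    then show ?thesis
    proof cases
      case 1 then show ?thesis using p3 g2 by simp
    next
      case 2
      have "H (d, e) = Some Perp" using p3 g2 2 assms ax2'[of i d e] tD[of i d e] by auto
      then have "H (d, k) = Some Perp" using p3 g2 2 assms ax3[of d e k] tD[of k d e] by auto
      then show ?thesis using p3 unfolding PW_def by blast
    next
      case 3
      have ed: "H (e, d) = Some Perp" using p3 g2 3 assms ax2[of i e d] tD[of i e d] by auto
      then have "H (e, j) = Some Perp" using p3 g2 3 assms ax3[of e d j] tD[of j e d] by auto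
      then show ?thesis using p3 g2 3 trans[of e d j] unfolding PW_def by blast
    qed
  qed
qed

lemma L3:
  assumes "lt i j" "lt j k" "i \<in> A \<union> B" "j \<in> A \<union> B" "k \<in> A \<union> B" "PW i j" "GW j k"
  shows "PW i k"
  using assms(7)
proof (cases rule: GWE)
  case g1
  from assms(6) show ?thesis
  proof (cases rule: PWE)
    case p0
    show ?thesis
    proof (cases "j \<in> A \<inter> B")
      case True then show ?thesis using g1 p0 assms(1,2) unfolding PW_def by blast
    next
      case False then show ?thesis using g1 p0 assms(1,2) ax3[of i j k] tJ[of i j k Perp Ge] unfolding PW_def by blast
    qed
  next
    case (p1 d)
    have "H (d, k) = Some Perp" using g1 p1 assms ax3[of d j k] tH[of j k Ge d] trans[of d i j] by auto
    then show ?thesis using p1 unfolding PW_def by blast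
  next
    case (p2 d)
    have "H (d, k) = Some Ge" using g1 p2 assms ax1[of d j k] tH[of j k Ge d] trans[of d i j] by auto
    then show ?thesis using p2 unfolding PW_def by blast
  next
    case (p3 d)
    have "H (d, k) = Some Ge" using g1 p3 assms ax1[of d j k] tH[of j k Ge d] by auto
    then show ?thesis using p3 assms trans[of d j k] unfolding PW_def by blast
  qed
next
  case (g2 e)
  from assms(6) show ?thesis
  proof (cases rule: PWE)
    case p0
    have "H (i, e) = Some Perp" using g2 p0 assms ax3[of i j e] tH[of i j Perp e] by auto
    then show ?thesis using g2 assms trans[of i j e] unfolding PW_def by blast
  next
    case (p1 d)
    have "H (d, e) = Some Perp" using g2 p1 assms ax3[of d j e] tD[of j d e] trans[of d i j] by auto
    then have "H (d, k) = Some Perp" using g2 p1 assms ax3[of d e k] tD[of k d e] trans[of d i j] trans[of d j e] by auto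
    then show ?thesis using p1 unfolding PW_def by blast
  next
    case (p2 d)
    have "H (d, e) = Some Ge" using g2 p2 assms ax1[of d j e] tD[of j d e] trans[of d i j] by auto
    then have "H (d, k) = Some Ge" using g2 p2 assms ax1[of d e k] tD[of k d e] trans[of d i j] trans[of d j e] by auto
    then show ?thesis using p2 unfolding PW_def by blast
  next
    case (p3 d)
    have "H (d, e) = Some Ge" using g2 p3 assms ax1[of d j e] tD[of j d e] by auto
    then have "H (d, k) = Some Ge" using g2 p3 assms ax1[of d e k] tD[of k d e] trans[of d j e] by auto
    then show ?thesis using p3 assms trans[of d j k] unfolding PW_def by blast
  qed
qed

lemma LU: "lt x y \<Longrightarrow> H (x, y) = Some U \<Longrightarrow> \<not> GW x y \<and> \<not> PW x y"
proof
  assume a: "lt x y" "H (x, y) = Some U"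
  show "\<not> GW x y"
  proof
    assume "GW x y"
    then show False
    proof (cases rule: GWE)
      case g1 then show ?thesis using a by simp
    next
      case (g2 e) then show ?thesis using a ax1[of x e y] tH[of x y U e] by auto
    qed
  qed
  show "\<not> PW x y"
  proof
    assume "PW x y"
    then show False
    proof (cases rule: PWE)
      case p0 then show ?thesis using a by simp
    next
      case (p1 d) then show ?thesis using a ax2[of d x y] tH[of x y U d] by auto
    next
      case (p2 d) then show ?thesis using a ax2'[of d x y] tH[of x y U d] by auto
    next
      case (p3 d) then show ?thesis using a ax3[of x d y] tH[of x y U d] by auto
    qed
  qed
qed

end

theorem proposition4p4:
  fixes lam :: "'a rel" and mu :: "'b rel"
    and p q :: "'a set \<times> ('a \<times> 'a \<Rightarrow> sym3 option)"
  assumes "Card_order lam" and "Card_order mu"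
    and "infinite (Field mu)" and "infinite (Field lam)"
    and "mu <o lam"
    and "|small_funcs mu| =o mu"
    and "regularCard lam"
    and "p \<in> PP lam mu" and "q \<in> PP lam mu"
    and "\<forall>x \<in> pairs2 lam (fst p \<inter> fst q). snd p x = snd q x"
  shows "\<exists>s \<in> PP lam mu. fst p \<union> fst q \<subseteq> fst s \<and>
           snd p \<subseteq>\<^sub>m snd s \<and> snd q \<subseteq>\<^sub>m snd s"
proof -
  define A where "A = fst p"
  define B where "B = fst q"
  define pf where "pf = snd p"
  define qf where "qf = snd q"
  have pA: "A \<subseteq> Field lam" "|A| <o mu" "valuation lam A pf"
    using assms(8) unfolding A_def pf_def PP_def by auto
  have qB: "B \<subseteq> Field lam" "|B| <o mu" "valuation lam B qf"
    using assms(9) unfolding B_def qf_def PP_def by auto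
  have agree: "\<And>x y. x \<in> A \<Longrightarrow> y \<in> A \<Longrightarrow> x \<in> B \<Longrightarrow> y \<in> B \<Longrightarrow> olt lam x y \<Longrightarrow> pf (x, y) = qf (x, y)"
    using assms(10) unfolding A_def B_def pf_def qf_def pairs2_def by auto
  have wo: "well_order_on (Field lam) lam"
    using assms(1) card_order_on_well_order_on by blast
  have tr: "trans lam" and ans: "antisym lam" and tot: "total_on (Field lam) lam"
    using wo unfolding well_order_on_def linear_order_on_def partial_order_on_def preorder_on_def
    by blast+
  have ltrans: "olt lam x z" if "olt lam x y" "olt lam y z" for x y z
  proof -
    have "(x, y) \<in> lam" "(y, z) \<in> lam" "x \<noteq> y" using that unfolding olt_def by auto
    moreover have "(x, z) \<in> lam" using calculation tr by (meson transD)
    moreover have "x \<noteq> z" using calculation ans by (metis antisymD)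
    ultimately show ?thesis unfolding olt_def by blast
  qed
  have lasym: "\<not> olt lam y x" if "olt lam x y" for x y
    using that ans unfolding olt_def by (metis antisymD)
  have ltot: "olt lam x y \<or> olt lam y x" if "x \<in> A \<union> B" "y \<in> A \<union> B" "x \<noteq> y" for x y
  proof -
    have "x \<in> Field lam" "y \<in> Field lam" using that pA qB by auto
    then show ?thesis
      using tot that(3) unfolding olt_def total_on_def by blast
  qed
  define H where "H = (\<lambda>(x, y). if x \<in> A \<and> y \<in> A then pf (x, y) else if x \<in> B \<and> y \<in> B then qf (x, y) else None)"
  have HA: "H (x, y) = pf (x, y)" if "x \<in> A" "y \<in> A" for x y
    using that unfolding H_def by simp
  have HB: "H (x, y) = qf (x, y)" if "x \<in> B" "y \<in> B" "olt lam x y" for x y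
    using that agree unfolding H_def by auto
  have vA: "\<forall>i\<in>A. \<forall>j\<in>A. \<forall>k\<in>A. olt lam i j \<longrightarrow> olt lam j k \<longrightarrow>
        (pf (i, j) = Some Ge \<and> pf (j, k) = Some Ge \<longrightarrow> pf (i, k) = Some Ge) \<and>
        ({pf (i, j), pf (i, k)} = {Some Perp, Some Ge} \<longrightarrow> pf (j, k) = Some Perp) \<and>
        (pf (i, j) = Some Perp \<and> pf (j, k) = Some Ge \<longrightarrow> pf (i, k) = Some Perp)"
    using pA(3) unfolding valuation_def by blast
  have vB: "\<forall>i\<in>B. \<forall>j\<in>B. \<forall>k\<in>B. olt lam i j \<longrightarrow> olt lam j k \<longrightarrow>
        (qf (i, j) = Some Ge \<and> qf (j, k) = Some Ge \<longrightarrow> qf (i, k) = Some Ge) \<and>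
        ({qf (i, j), qf (i, k)} = {Some Perp, Some Ge} \<longrightarrow> qf (j, k) = Some Perp) \<and>
        (qf (i, j) = Some Perp \<and> qf (j, k) = Some Ge \<longrightarrow> qf (i, k) = Some Perp)"
    using qB(3) unfolding valuation_def by blast
  have tri3: "(H (x, y) = Some Ge \<and> H (y, z) = Some Ge \<longrightarrow> H (x, z) = Some Ge) \<and>
        ({H (x, y), H (x, z)} = {Some Perp, Some Ge} \<longrightarrow> H (y, z) = Some Perp) \<and>
        (H (x, y) = Some Perp \<and> H (y, z) = Some Ge \<longrightarrow> H (x, z) = Some Perp)"
    if "olt lam x y" "olt lam y z" "tri A B x y z" for x y z
  proof -
    have xz: "olt lam x z" using ltrans that by blast
    show ?thesis
    proof (cases "x \<in> A \<and> y \<in> A \<and> z \<in> A")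
      case True
      then have e: "H (x, y) = pf (x, y)" "H (y, z) = pf (y, z)" "H (x, z) = pf (x, z)" using HA by auto
      show ?thesis unfolding e using vA True that(1,2) by blast
    next
      case False
      then have "x \<in> B \<and> y \<in> B \<and> z \<in> B" using that(3) unfolding tri_def by blast
      then have e: "H (x, y) = qf (x, y)" "H (y, z) = qf (y, z)" "H (x, z) = qf (x, z)" using HB that(1,2) xz by auto
      show ?thesis unfolding e using vB \<open>x \<in> B \<and> y \<in> B \<and> z \<in> B\<close> that(1,2) by blast
    qed
  qed
  interpret amal "olt lam" A B H
  proof
    fix x y z
    show "olt lam x y \<Longrightarrow> olt lam y z \<Longrightarrow> olt lam x z" using ltrans by blast
    show "olt lam x y \<Longrightarrow> \<not> olt lam y x" using lasym by blast
    show "x \<in> A \<union> B \<Longrightarrow> y \<in> A \<union> B \<Longrightarrow> x \<noteq> y \<Longrightarrow> olt lam x y \<or> olt lam y x" using ltot by blast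
    show "olt lam x y \<Longrightarrow> H (x, y) \<noteq> None \<Longrightarrow> x \<in> A \<and> y \<in> A \<or> x \<in> B \<and> y \<in> B"
    proof -
      assume "H (x, y) \<noteq> None"
      then show ?thesis unfolding H_def by (simp split: if_splits)
    qed
    show "olt lam x y \<Longrightarrow> olt lam y z \<Longrightarrow> tri A B x y z \<Longrightarrow> H (x, y) = Some Ge \<Longrightarrow> H (y, z) = Some Ge \<Longrightarrow> H (x, z) = Some Ge"
    proof -
      assume a: "olt lam x y" "olt lam y z" "tri A B x y z" "H (x, y) = Some Ge" "H (y, z) = Some Ge"
      from tri3[OF a(1-3)] a(4,5) show ?thesis by blast
    qed
    show "olt lam x y \<Longrightarrow> olt lam y z \<Longrightarrow> tri A B x y z \<Longrightarrow> H (x, y) = Some Ge \<Longrightarrow> H (x, z) = Some Perp \<Longrightarrow> H (y, z) = Some Perp"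
    proof -
      assume a: "olt lam x y" "olt lam y z" "tri A B x y z" "H (x, y) = Some Ge" "H (x, z) = Some Perp"
      have "{H (x, y), H (x, z)} = {Some Perp, Some Ge}" unfolding a(4,5) by (rule insert_commute)
      with tri3[OF a(1-3)] show ?thesis by blast
    qed
    show "olt lam x y \<Longrightarrow> olt lam y z \<Longrightarrow> tri A B x y z \<Longrightarrow> H (x, y) = Some Perp \<Longrightarrow> H (x, z) = Some Ge \<Longrightarrow> H (y, z) = Some Perp"
    proof -
      assume a: "olt lam x y" "olt lam y z" "tri A B x y z" "H (x, y) = Some Perp" "H (x, z) = Some Ge"
      have "{H (x, y), H (x, z)} = {Some Perp, Some Ge}" unfolding a(4,5) by (rule refl)
      with tri3[OF a(1-3)] show ?thesis by blast
    qed
    show "olt lam x y \<Longrightarrow> olt lam y z \<Longrightarrow> tri A B x y z \<Longrightarrow> H (x, y) = Some Perp \<Longrightarrow> H (y, z) = Some Ge \<Longrightarrow> H (x, z) = Some Perp"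
    proof -
      assume a: "olt lam x y" "olt lam y z" "tri A B x y z" "H (x, y) = Some Perp" "H (y, z) = Some Ge"
      from tri3[OF a(1-3)] a(4,5) show ?thesis by blast
    qed
  qed
  define val where "val x y = (if GW x y then Ge else if PW x y then Perp else U)" for x y
  define f where "f = (\<lambda>(x, y). if (x, y) \<in> pairs2 lam (A \<union> B) then Some (val x y) else None)"
  have fv: "f (x, y) = Some (val x y)" if "x \<in> A \<union> B" "y \<in> A \<union> B" "olt lam x y" for x y
    using that unfolding f_def pairs2_def by auto
  have domf: "dom f = pairs2 lam (A \<union> B)"
    unfolding f_def dom_def by (auto split: if_splits)
  have tripf: "(f (i, j) = Some Ge \<and> f (j, k) = Some Ge \<longrightarrow> f (i, k) = Some Ge) \<and>
        ({f (i, j), f (i, k)} = {Some Perp, Some Ge} \<longrightarrow> f (j, k) = Some Perp) \<and>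
        (f (i, j) = Some Perp \<and> f (j, k) = Some Ge \<longrightarrow> f (i, k) = Some Perp)"
    if ijk: "i \<in> A \<union> B" "j \<in> A \<union> B" "k \<in> A \<union> B" "olt lam i j" "olt lam j k" for i j k
  proof -
    have ik: "olt lam i k" using ltrans ijk by blast
    have fij: "f (i, j) = Some (val i j)" and fjk: "f (j, k) = Some (val j k)" and fik: "f (i, k) = Some (val i k)"
      using fv ijk ik by auto
    have z: "\<And>x y. olt lam x y \<Longrightarrow> x \<in> A \<union> B \<Longrightarrow> y \<in> A \<union> B \<Longrightarrow> GW x y \<Longrightarrow> PW x y \<Longrightarrow> False"
      using L0 by blast
    have c1: "f (i, j) = Some Ge \<and> f (j, k) = Some Ge \<longrightarrow> f (i, k) = Some Ge"
      using fij fjk fik L1[OF ijk(4,5,1,2,3)] unfolding val_def by (auto split: if_splits)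
    have c2: "{f (i, j), f (i, k)} = {Some Perp, Some Ge} \<longrightarrow> f (j, k) = Some Perp"
    proof
      assume h: "{f (i, j), f (i, k)} = {Some Perp, Some Ge}"
      then have "(val i j = Perp \<and> val i k = Ge) \<or> (val i j = Ge \<and> val i k = Perp)"
        using fij fik by (auto simp: doubleton_eq_iff)
      then have "PW j k"
        using L2a[OF ijk(4,5,1,2,3)] L2b[OF ijk(4,5,1,2,3)] unfolding val_def by (auto split: if_splits)
      then show "f (j, k) = Some Perp"
        using fjk z[of j k] ijk unfolding val_def by auto
    qed
    have c3: "f (i, j) = Some Perp \<and> f (j, k) = Some Ge \<longrightarrow> f (i, k) = Some Perp"
    proof
      assume h: "f (i, j) = Some Perp \<and> f (j, k) = Some Ge"
      then have "PW i k"
        using fij fjk L3[OF ijk(4,5,1,2,3)] unfolding val_def by (auto split: if_splits)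
      then show "f (i, k) = Some Perp"
        using fik z[of i k] ijk ik unfolding val_def by auto
    qed
    show ?thesis using c1 c2 c3 by blast
  qed
  have val: "valuation lam (A \<union> B) f"
    unfolding valuation_def using domf tripf by blast
  have agreeH: "f (x, y) = H (x, y)" if hyp: "olt lam x y" "x \<in> A \<union> B" "y \<in> A \<union> B" "H (x, y) \<noteq> None" for x y
  proof -
    obtain v where v: "H (x, y) = Some v" using hyp(4) by auto
    show ?thesis
    proof (cases v)
      case Ge
      then have "GW x y" using v unfolding GW_def by simp
      then show ?thesis using fv hyp v Ge unfolding val_def by simp
    next
      case Perp
      then have "PW x y" using v unfolding PW_def by simp
      then show ?thesis using fv hyp v Perp L0[of x y] unfolding val_def by auto
    next
      case U
      then show ?thesis using fv hyp v LU[of x y] unfolding val_def by auto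
    qed
  qed
  have card: "|A \<union> B| <o mu"
    using card_of_Un_ordLess_infinite_Field[OF assms(3,2) pA(2) qB(2)] .
  have sPP: "(A \<union> B, f) \<in> PP lam mu"
    unfolding PP_def using pA(1) qB(1) card val by auto
  have mp: "pf \<subseteq>\<^sub>m f"
    unfolding map_le_def
  proof
    fix a assume "a \<in> dom pf"
    then obtain x y where a: "a = (x, y)" "x \<in> A" "y \<in> A" "olt lam x y"
      using pA(3) unfolding valuation_def pairs2_def by auto
    then show "pf a = f a" using agreeH[of x y] HA[of x y] \<open>a \<in> dom pf\<close> by auto
  qed
  have mq: "qf \<subseteq>\<^sub>m f"
    unfolding map_le_def
  proof
    fix a assume "a \<in> dom qf"
    then obtain x y where a: "a = (x, y)" "x \<in> B" "y \<in> B" "olt lam x y"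
      using qB(3) unfolding valuation_def pairs2_def by auto
    then show "qf a = f a" using agreeH[of x y] HB[of x y] \<open>a \<in> dom qf\<close> by auto
  qed
  show ?thesis
    using sPP mp mq unfolding A_def B_def pf_def qf_def by (intro bexI[of _ "(A \<union> B, f)"]) (auto simp: A_def B_def)
qed

end
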